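(* Let $X$ be a regular Hausdorff space and $\mathcal{P}$ a family of subsets of $X$. For $r\in\mathbb{N}$ and $P_1,\dots,P_r\in\mathcal{P}$ put $\langle P_1,\dots,P_r\rangle=\{K\in\mathcal{K}(X): K\subset \bigcup_{i=1}^r P_i,\ K\cap P_j\neq\emptyset\ (1\le j\le r)\}$ and $\mathcal{B}=\{\langle P_1,\dots,P_r\rangle: P_i\in\mathcal{P},\ r\in\mathbb{N}\}$. If $\mathcal{P}$ is compact-countable (resp. locally countable, locally finite, compact-finite) in $X$, then $\mathcal{B}$ is compact-countable (resp. locally countable, locally finite, compact-finite) in $\mathcal{K}(X)$. Moreover, if $\mathcal{P}$ consists of closed subsets of $X$, then $\mathcal{B}$ consists of closed subsets of $\mathcal{K}(X)$.
   Context: $\mathcal{K}(X)$ is the space of nonempty compact subsets of $X$ with the Vietoris topology, whose base consists of the sets $\langle U_1,\dots,U_k\rangle=\{K\in\mathcal{K}(X): K\subset\bigcup_{i=1}^k U_i,\ K\cap U_j\neq\emptyset \text{ for all } j\}$ with $U_i$ open in $X$. A family $\{X_\alpha\}$ of subsets of a space $Y$ is compact-countable (resp. compact-finite) if every compact $K\subset Y$ meets only countably (resp. finitely) many $X_\alpha$; locally countable (resp. locally finite) if every point has a neighborhood meeting only countably (resp. finitely) many $X_\alpha$. *)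

theory Defs
  imports "HOL-Analysis.Analysis"
begin

definition Kc :: "'a topology \<Rightarrow> 'a set set" where
  "Kc X = {K. K \<noteq> {} \<and> compactin X K}"

definition vbox :: "'a topology \<Rightarrow> 'a set list \<Rightarrow> 'a set set" where
  "vbox X Ps = {K \<in> Kc X. K \<subseteq> \<Union>(set Ps) \<and> (\<forall>P\<in>set Ps. K \<inter> P \<noteq> {})}"

definition vietoris :: "'a topology \<Rightarrow> 'a set topology" where
  "vietoris X = topology_generated_by
     {vbox X Us | Us. Us \<noteq> [] \<and> (\<forall>U\<in>set Us. openin X U)}"

definition box_family :: "'a topology \<Rightarrow> 'a set set \<Rightarrow> 'a set set set" where
  "box_family X \<P> = {vbox X Ps | Ps. Ps \<noteq> [] \<and> set Ps \<subseteq> \<P>}"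

definition compact_countable :: "'a topology \<Rightarrow> 'a set set \<Rightarrow> bool" where
  "compact_countable T F \<longleftrightarrow> (\<forall>K. compactin T K \<longrightarrow> countable {A \<in> F. A \<inter> K \<noteq> {}})"

definition compact_finite :: "'a topology \<Rightarrow> 'a set set \<Rightarrow> bool" where
  "compact_finite T F \<longleftrightarrow> (\<forall>K. compactin T K \<longrightarrow> finite {A \<in> F. A \<inter> K \<noteq> {}})"

definition locally_countable :: "'a topology \<Rightarrow> 'a set set \<Rightarrow> bool" where
  "locally_countable T F \<longleftrightarrow>
     (\<forall>x\<in>topspace T. \<exists>U. openin T U \<and> x \<in> U \<and> countable {A \<in> F. A \<inter> U \<noteq> {}})"

definition locally_finite_fam :: "'a topology \<Rightarrow> 'a set set \<Rightarrow> bool" where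
  "locally_finite_fam T F \<longleftrightarrow>
     (\<forall>x\<in>topspace T. \<exists>U. openin T U \<and> x \<in> U \<and> finite {A \<in> F. A \<inter> U \<noteq> {}})"

end

theory Submission
  imports Defs
begin

lemma vbox_single: "vbox X [W] = {K \<in> Kc X. K \<subseteq> W \<and> K \<inter> W \<noteq> {}}"
  unfolding vbox_def by simp

lemma vbox_sub: "vbox X Ps \<subseteq> Kc X"
  unfolding vbox_def by blast

lemma vt_topspace: "topspace (vietoris X) = Kc X"
proof -
  have "\<Union>{vbox X Us | Us. Us \<noteq> [] \<and> (\<forall>U\<in>set Us. openin X U)} = Kc X"
  proof
    show "\<Union>{vbox X Us | Us. Us \<noteq> [] \<and> (\<forall>U\<in>set Us. openin X U)} \<subseteq> Kc X"
    proof
      fix K assume "K \<in> \<Union>{vbox X Us | Us. Us \<noteq> [] \<and> (\<forall>U\<in>set Us. openin X U)}"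
      then obtain Us where "K \<in> vbox X Us" by blast
      then show "K \<in> Kc X" using vbox_sub by blast
    qed
    show "Kc X \<subseteq> \<Union>{vbox X Us | Us. Us \<noteq> [] \<and> (\<forall>U\<in>set Us. openin X U)}"
    proof
      fix K assume K: "K \<in> Kc X"
      then have "K \<subseteq> topspace X" "K \<noteq> {}" by (auto simp: Kc_def dest: compactin_subset_topspace)
      then have "K \<inter> topspace X \<noteq> {}" by blast
      then have "K \<in> vbox X [topspace X]"
        using K \<open>K \<subseteq> topspace X\<close> unfolding vbox_single by blast
      moreover have "vbox X [topspace X] \<in> {vbox X Us | Us. Us \<noteq> [] \<and> (\<forall>U\<in>set Us. openin X U)}"
        by (intro CollectI exI[of _ "[topspace X]"]) simp
      ultimately show "K \<in> \<Union>{vbox X Us | Us. Us \<noteq> [] \<and> (\<forall>U\<in>set Us. openin X U)}"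
        by (rule UnionI[rotated])
    qed
  qed
  then show ?thesis by (simp add: vietoris_def)
qed

lemma vt_open: "Us \<noteq> [] \<Longrightarrow> (\<forall>U\<in>set Us. openin X U) \<Longrightarrow> openin (vietoris X) (vbox X Us)"
  unfolding vietoris_def by (rule topology_generated_by_Basis) (intro CollectI exI[of _ Us] conjI refl)

lemma vbox_two: "vbox X [V, W] = {K \<in> Kc X. K \<subseteq> V \<union> W \<and> K \<inter> V \<noteq> {} \<and> K \<inter> W \<noteq> {}}"
  unfolding vbox_def by simp

definition gbox :: "'a topology \<Rightarrow> 'a set set \<Rightarrow> 'a set set" where
  "gbox X S = {K \<in> Kc X. K \<subseteq> \<Union>S \<and> (\<forall>P\<in>S. K \<inter> P \<noteq> {})}"

lemma vbox_gbox: "vbox X Ps = gbox X (set Ps)"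
  by (simp add: vbox_def gbox_def)

lemma boxes_meeting:
  assumes "\<Union>C \<subseteq> L"
  shows "{B \<in> box_family X \<P>. B \<inter> C \<noteq> {}} \<subseteq> gbox X ` {S. finite S \<and> S \<subseteq> {A \<in> \<P>. A \<inter> L \<noteq> {}}}"
proof
  fix B assume "B \<in> {B \<in> box_family X \<P>. B \<inter> C \<noteq> {}}"
  then obtain Ps where Ps: "B = vbox X Ps" "set Ps \<subseteq> \<P>" and BC: "B \<inter> C \<noteq> {}"
    unfolding box_family_def by blast
  then obtain K where K: "K \<in> vbox X Ps" "K \<in> C" by blast
  then have "K \<subseteq> L" using assms by blast
  have "\<forall>P\<in>set Ps. K \<inter> P \<noteq> {}" using K(1) unfolding vbox_def by blast
  then have "set Ps \<subseteq> {A \<in> \<P>. A \<inter> L \<noteq> {}}"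
    using \<open>K \<subseteq> L\<close> Ps by blast
  then have "set Ps \<in> {S. finite S \<and> S \<subseteq> {A \<in> \<P>. A \<inter> L \<noteq> {}}}" by simp
  then show "B \<in> gbox X ` {S. finite S \<and> S \<subseteq> {A \<in> \<P>. A \<inter> L \<noteq> {}}}"
    unfolding Ps(1) vbox_gbox by (rule imageI)
qed

lemma union_compact:
  assumes C: "compactin (vietoris X) C"
  shows "compactin X (\<Union>C)"
proof -
  have CK: "C \<subseteq> Kc X" using compactin_subset_topspace[OF C] by (simp add: vt_topspace)
  have sub: "\<Union>C \<subseteq> topspace X" using CK by (auto simp: Kc_def dest: compactin_subset_topspace)
  show ?thesis unfolding compactin_def
  proof (intro conjI allI impI)
    show "\<Union>C \<subseteq> topspace X" by (rule sub)
  next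
    fix \<U> assume U: "(\<forall>U\<in>\<U>. openin X U) \<and> \<Union>C \<subseteq> \<Union>\<U>"
    define h where "h = (\<lambda>F. vbox X [\<Union>F])"
    define \<V> where "\<V> = h ` {F. finite F \<and> F \<subseteq> \<U>}"
    have Vo: "\<forall>V\<in>\<V>. openin (vietoris X) V"
    proof
      fix V assume "V \<in> \<V>"
      then obtain F where F: "finite F" "F \<subseteq> \<U>" "V = h F" unfolding \<V>_def by auto
      have "openin X (\<Union>F)"
      proof (rule openin_Union)
        fix S assume "S \<in> F"
        with F(2) have "S \<in> \<U>" by blast
        with U show "openin X S" by blast
      qed
      then show "openin (vietoris X) V" unfolding F(3) h_def by (intro vt_open) simp_all
    qed
    have "C \<subseteq> \<Union>\<V>"
    proof
      fix K assume K: "K \<in> C"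
      then have "compactin X K" "K \<noteq> {}" using CK by (auto simp: Kc_def)
      moreover have "K \<subseteq> \<Union>\<U>" using K U by blast
      ultimately obtain F where F: "finite F" "F \<subseteq> \<U>" "K \<subseteq> \<Union>F"
        using U unfolding compactin_def by meson
      then have "K \<in> h F" using K CK \<open>K \<noteq> {}\<close> unfolding h_def vbox_single by blast
      then show "K \<in> \<Union>\<V>" using F unfolding \<V>_def by blast
    qed
    then obtain \<G> where G: "finite \<G>" "\<G> \<subseteq> \<V>" "C \<subseteq> \<Union>\<G>"
      using C Vo unfolding compactin_def by meson
    then obtain \<F> where F: "finite \<F>" "\<F> \<subseteq> {F. finite F \<and> F \<subseteq> \<U>}" "\<G> = h ` \<F>"
      unfolding \<V>_def by (meson finite_subset_image)
    show "\<exists>\<F>. finite \<F> \<and> \<F> \<subseteq> \<U> \<and> \<Union>C \<subseteq> \<Union>\<F>"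
    proof (intro exI conjI)
      show "finite (\<Union>\<F>)" using F by auto
      show "\<Union>\<F> \<subseteq> \<U>" using F by auto
      show "\<Union>C \<subseteq> \<Union>(\<Union>\<F>)"
      proof
        fix x assume "x \<in> \<Union>C"
        then obtain K where "x \<in> K" "K \<in> C" by blast
        then obtain F0 where "F0 \<in> \<F>" "K \<in> h F0" using G F by blast
        then have "K \<subseteq> \<Union>F0" unfolding h_def vbox_single by blast
        then show "x \<in> \<Union>(\<Union>\<F>)" using \<open>x \<in> K\<close> \<open>F0 \<in> \<F>\<close> by blast
      qed
    qed
  qed
qed

lemma local_cover:
  assumes K: "compactin X K"
    and H: "\<forall>x\<in>topspace X. \<exists>U. openin X U \<and> x \<in> U \<and> Q U"
  shows "\<exists>F. finite F \<and> (\<forall>U\<in>F. openin X U \<and> Q U) \<and> K \<subseteq> \<Union>F"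
proof -
  have "K \<subseteq> \<Union>{U. openin X U \<and> Q U}"
  proof
    fix x assume "x \<in> K"
    then have "x \<in> topspace X" using K compactin_subset_topspace by blast
    then show "x \<in> \<Union>{U. openin X U \<and> Q U}" using H by blast
  qed
  moreover have "\<forall>U\<in>{U. openin X U \<and> Q U}. openin X U" by blast
  ultimately obtain F where "finite F" "F \<subseteq> {U. openin X U \<and> Q U}" "K \<subseteq> \<Union>F"
    using K unfolding compactin_def by blast
  then show ?thesis by blast
qed

lemma local_part:
  assumes H: "\<forall>x\<in>topspace X. \<exists>U. openin X U \<and> x \<in> U \<and> Q {A \<in> \<P>. A \<inter> U \<noteq> {}}"
    and Qun: "\<And>F. finite F \<Longrightarrow> (\<forall>U\<in>F. Q {A \<in> \<P>. A \<inter> U \<noteq> {}}) \<Longrightarrow> Q {A \<in> \<P>. A \<inter> \<Union>F \<noteq> {}}"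
    and Qfin: "\<And>S. Q S \<Longrightarrow> Q' (gbox X ` {T. finite T \<and> T \<subseteq> S})"
    and Qsub: "\<And>S T. Q' S \<Longrightarrow> T \<subseteq> S \<Longrightarrow> Q' T"
  shows "\<forall>K\<in>topspace (vietoris X). \<exists>V. openin (vietoris X) V \<and> K \<in> V \<and> Q' {B \<in> box_family X \<P>. B \<inter> V \<noteq> {}}"
proof
  fix K assume "K \<in> topspace (vietoris X)"
  then have K: "K \<in> Kc X" by (simp add: vt_topspace)
  then obtain F where F: "finite F" "\<forall>U\<in>F. openin X U \<and> Q {A \<in> \<P>. A \<inter> U \<noteq> {}}" "K \<subseteq> \<Union>F"
    using local_cover[of X K "\<lambda>U. Q {A \<in> \<P>. A \<inter> U \<noteq> {}}"] H by (auto simp: Kc_def)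
  define W where "W = \<Union>F"
  have Wo: "openin X W" using F by (auto simp: W_def)
  have QW: "Q {A \<in> \<P>. A \<inter> W \<noteq> {}}" unfolding W_def by (rule Qun) (use F in auto)
  show "\<exists>V. openin (vietoris X) V \<and> K \<in> V \<and> Q' {B \<in> box_family X \<P>. B \<inter> V \<noteq> {}}"
  proof (intro exI conjI)
    show "openin (vietoris X) (vbox X [W])" using Wo by (intro vt_open) simp_all
    show "K \<in> vbox X [W]" using K F unfolding vbox_single W_def Kc_def by blast
    have "\<Union>(vbox X [W]) \<subseteq> W" unfolding vbox_single by blast
    then show "Q' {B \<in> box_family X \<P>. B \<inter> vbox X [W] \<noteq> {}}"
      by (rule Qsub[OF Qfin[OF QW] boxes_meeting])
  qed
qed

theorem proposition3p4:
  fixes X :: "'a topology" and \<P> :: "'a set set"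
  assumes "regular_space X" and "Hausdorff_space X"
    and "\<forall>P\<in>\<P>. P \<subseteq> topspace X"
  shows "(compact_countable X \<P> \<longrightarrow> compact_countable (vietoris X) (box_family X \<P>))
    \<and> (locally_countable X \<P> \<longrightarrow> locally_countable (vietoris X) (box_family X \<P>))
    \<and> (locally_finite_fam X \<P> \<longrightarrow> locally_finite_fam (vietoris X) (box_family X \<P>))
    \<and> (compact_finite X \<P> \<longrightarrow> compact_finite (vietoris X) (box_family X \<P>))
    \<and> ((\<forall>P\<in>\<P>. closedin X P) \<longrightarrow> (\<forall>B\<in>box_family X \<P>. closedin (vietoris X) B))"
proof (intro conjI impI)
  assume cc: "compact_countable X \<P>"
  show "compact_countable (vietoris X) (box_family X \<P>)"
    unfolding compact_countable_def
  proof (intro allI impI)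
    fix C assume C: "compactin (vietoris X) C"
    then have "countable {A \<in> \<P>. A \<inter> \<Union>C \<noteq> {}}"
      using cc union_compact unfolding compact_countable_def by blast
    then show "countable {B \<in> box_family X \<P>. B \<inter> C \<noteq> {}}"
      by (intro countable_subset[OF boxes_meeting[OF order_refl]] countable_image countable_Collect_finite_subset)
  qed
next
  assume cc: "compact_finite X \<P>"
  show "compact_finite (vietoris X) (box_family X \<P>)"
    unfolding compact_finite_def
  proof (intro allI impI)
    fix C assume C: "compactin (vietoris X) C"
    then have "finite {A \<in> \<P>. A \<inter> \<Union>C \<noteq> {}}"
      using cc union_compact unfolding compact_finite_def by blast
    then have "finite {S. finite S \<and> S \<subseteq> {A \<in> \<P>. A \<inter> \<Union>C \<noteq> {}}}"
      by (rule finite_subset[rotated, OF finite_Pow_iff[THEN iffD2]]) blast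
    then show "finite {B \<in> box_family X \<P>. B \<inter> C \<noteq> {}}"
      by (intro finite_subset[OF boxes_meeting[OF order_refl]] finite_imageI)
  qed
next
  assume lc: "locally_countable X \<P>"
  show "locally_countable (vietoris X) (box_family X \<P>)"
    unfolding locally_countable_def
  proof (rule local_part[where Q=countable and Q'=countable])
    show "\<forall>x\<in>topspace X. \<exists>U. openin X U \<and> x \<in> U \<and> countable {A \<in> \<P>. A \<inter> U \<noteq> {}}"
      using lc unfolding locally_countable_def by blast
  next
    fix F :: "'a set set" assume F: "finite F" "\<forall>U\<in>F. countable {A \<in> \<P>. A \<inter> U \<noteq> {}}"
    have eq: "{A \<in> \<P>. A \<inter> \<Union>F \<noteq> {}} = (\<Union>U\<in>F. {A \<in> \<P>. A \<inter> U \<noteq> {}})" by blast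
    have "countable (\<Union>U\<in>F. {A \<in> \<P>. A \<inter> U \<noteq> {}})"
      by (rule countable_UN[OF countable_finite[OF F(1)]]) (use F(2) in blast)
    then show "countable {A \<in> \<P>. A \<inter> \<Union>F \<noteq> {}}" by (simp only: eq)
  next
    fix S :: "'a set set" assume "countable S"
    then show "countable (gbox X ` {T. finite T \<and> T \<subseteq> S})"
      by (intro countable_image countable_Collect_finite_subset)
  next
    fix S T :: "'a set set set" assume "countable S" "T \<subseteq> S"
    then show "countable T" by (rule countable_subset[rotated])
  qed
next
  assume lc: "locally_finite_fam X \<P>"
  show "locally_finite_fam (vietoris X) (box_family X \<P>)"
    unfolding locally_finite_fam_def
  proof (rule local_part[where Q=finite and Q'=finite])
    show "\<forall>x\<in>topspace X. \<exists>U. openin X U \<and> x \<in> U \<and> finite {A \<in> \<P>. A \<inter> U \<noteq> {}}"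
      using lc unfolding locally_finite_fam_def by blast
  next
    fix F :: "'a set set" assume F: "finite F" "\<forall>U\<in>F. finite {A \<in> \<P>. A \<inter> U \<noteq> {}}"
    have eq: "{A \<in> \<P>. A \<inter> \<Union>F \<noteq> {}} = (\<Union>U\<in>F. {A \<in> \<P>. A \<inter> U \<noteq> {}})" by blast
    have "finite (\<Union>U\<in>F. {A \<in> \<P>. A \<inter> U \<noteq> {}})"
      by (rule finite_UN_I[OF F(1)]) (use F(2) in blast)
    then show "finite {A \<in> \<P>. A \<inter> \<Union>F \<noteq> {}}" by (simp only: eq)
  next
    fix S :: "'a set set" assume "finite S"
    then have "finite {T. finite T \<and> T \<subseteq> S}"
      by (rule finite_subset[rotated, OF finite_Pow_iff[THEN iffD2]]) blast
    then show "finite (gbox X ` {T. finite T \<and> T \<subseteq> S})" by (rule finite_imageI)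
  next
    fix S T :: "'a set set set" assume "finite S" "T \<subseteq> S"
    then show "finite T" by (rule finite_subset[rotated])
  qed
next
  assume cl: "\<forall>P\<in>\<P>. closedin X P"
  show "\<forall>B\<in>box_family X \<P>. closedin (vietoris X) B"
  proof
    fix B assume "B \<in> box_family X \<P>"
    then obtain Ps where Ps: "B = vbox X Ps" "Ps \<noteq> []" "set Ps \<subseteq> \<P>"
      unfolding box_family_def by blast
    have clU: "closedin X (\<Union>(set Ps))"
    proof (rule closedin_Union)
      show "finite (set Ps)" by simp
      fix T assume "T \<in> set Ps"
      then show "closedin X T" using Ps(3) cl by blast
    qed
    define O1 where "O1 = vbox X [topspace X, topspace X - \<Union>(set Ps)]"
    define O2 where "O2 = \<Union>((\<lambda>P. vbox X [topspace X - P]) ` set Ps)"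
    have oU: "openin X (topspace X - \<Union>(set Ps))" by (rule openin_diff[OF openin_topspace clU])
    have o1: "openin (vietoris X) O1" unfolding O1_def
      by (rule vt_open) (simp_all add: oU)
    have o2: "openin (vietoris X) O2" unfolding O2_def
    proof (rule openin_Union)
      fix V assume "V \<in> (\<lambda>P. vbox X [topspace X - P]) ` set Ps"
      then obtain P where P: "P \<in> set Ps" "V = vbox X [topspace X - P]" by blast
      then have "closedin X P" using Ps cl by blast
      then have oP: "openin X (topspace X - P)" by (rule openin_diff[OF openin_topspace])
      show "openin (vietoris X) V" unfolding P(2) by (rule vt_open) (simp_all add: oP)
    qed
    have eq: "Kc X - B = O1 \<union> O2"
    proof (rule antisym)
      show "Kc X - B \<subseteq> O1 \<union> O2"
      proof
        fix K assume K: "K \<in> Kc X - B"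
        then have KK: "K \<in> Kc X" "K \<notin> B" by simp_all
        then have "compactin X K" "K \<noteq> {}" unfolding Kc_def by simp_all
        then have Kt: "K \<subseteq> topspace X" "K \<noteq> {}" using compactin_subset_topspace by blast+
        show "K \<in> O1 \<union> O2"
        proof (cases "K \<subseteq> \<Union>(set Ps)")
          case True
          have "\<not> (\<forall>P\<in>set Ps. K \<inter> P \<noteq> {})"
          proof
            assume "\<forall>P\<in>set Ps. K \<inter> P \<noteq> {}"
            then have "K \<in> vbox X Ps" unfolding vbox_def using KK(1) True by simp
            then show False using KK(2) Ps(1) by simp
          qed
          then obtain P where P: "P \<in> set Ps" "K \<inter> P = {}" by blast
          have "K \<subseteq> topspace X - P" using Kt(1) P(2) by blast
          moreover have "K \<inter> (topspace X - P) \<noteq> {}" using Kt P(2) by blast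
          ultimately have "K \<in> vbox X [topspace X - P]" unfolding vbox_single using KK(1) by simp
          then have "K \<in> O2" using P(1) unfolding O2_def by blast
          then show ?thesis by simp
        next
          case False
          have "K \<subseteq> topspace X \<union> (topspace X - \<Union>(set Ps))" using Kt(1) by blast
          moreover have "K \<inter> topspace X \<noteq> {}" using Kt by blast
          moreover have "K \<inter> (topspace X - \<Union>(set Ps)) \<noteq> {}" using Kt(1) False by blast
          ultimately have "K \<in> O1" unfolding O1_def vbox_two using KK(1) by simp
          then show ?thesis by simp
        qed
      qed
      have "O1 \<subseteq> Kc X - B"
      proof
        fix K assume "K \<in> O1"
        then have "K \<in> Kc X" "K \<inter> (topspace X - \<Union>(set Ps)) \<noteq> {}" unfolding O1_def vbox_two by simp_all
        then have "K \<in> Kc X" "\<not> K \<subseteq> \<Union>(set Ps)" by blast+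
        then show "K \<in> Kc X - B" unfolding Ps(1) vbox_def by simp
      qed
      moreover have "O2 \<subseteq> Kc X - B"
      proof
        fix K assume "K \<in> O2"
        then obtain P where P: "P \<in> set Ps" "K \<in> vbox X [topspace X - P]" unfolding O2_def by blast
        then have "K \<in> Kc X" "K \<subseteq> topspace X - P" unfolding vbox_single by simp_all
        then have "K \<in> Kc X" "K \<inter> P = {}" by blast+
        then show "K \<in> Kc X - B" unfolding Ps(1) vbox_def using P(1) by auto
      qed
      ultimately show "O1 \<union> O2 \<subseteq> Kc X - B" by (rule Un_least)
    qed
    show "closedin (vietoris X) B"
      unfolding closedin_def vt_topspace
    proof
      show "B \<subseteq> Kc X" using Ps(1) vbox_sub by simp
      show "openin (vietoris X) (Kc X - B)" unfolding eq using o1 o2 by (rule openin_Un)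
    qed
  qed
qed

end
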